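(* Let $F:\mathbb{R}^n\to\mathbb{R}$ be convex and $h:\mathbb{R}^n\to\mathbb{R}^p$ with $-h$ convex, both continuous, let $\emptyset\ne I\subseteq\{1,\dots,n\}$, and consider the convex binary MINLP $\min\{F(x): h(x)\ge 0,\ x_i\in\{0,1\}\text{ for } i\in I\}$, where $\{x: h(x)\ge 0\}$ is nonempty and compact. Let $X:=\{x\in\mathbb{R}^n: h(x)\ge 0,\ x_I\in[0,1]^I\}$, $Y:=\{0,1\}^I$ and $$\min_{x,y}\ \|x_I-y\|_1 \quad\text{s.t.}\quad x\in X,\ y\in Y. \qquad (\ast)$$ The idealized feasibility pump for this convex MINLP (starting from a solution $x^0$ of the continuous relaxation and $y^0$ the rounding of $x^0_I$, alternately computing $x^{k+1}\in\arg\min_{x\in X}\|x_I-y^k\|_1$ as a global minimizer and $y^{k+1}\in\arg\min_{y\in Y}\|x^{k+1}_I-y\|_1$ as the rounding of $x^{k+1}_I$ with ties broken lexicographically minimally, without random perturbations, and stopping as soon as the iterate is a partial minimum of $(\ast)$) is the alternating direction method applied to $(\ast)$. It terminates at a partial minimum $(x^*,y^* )$ of $(\ast)$ after a finite number of iterations. If this partial minimum has objective value $\|x^*_I-y^*\|_1=0$, then $(x^*,y^* )$ is feasible for the convex MINLP (i.e., $x^*$ is feasible for it).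
   Context: A point $(x^*,y^* )\in X\times Y$ is a partial minimum of $(\ast)$ if $\|x^*_I-y^*\|_1\le\|x_I-y^*\|_1$ for all $x\in X$ and $\|x^*_I-y^*\|_1\le \|x^*_I-y\|_1$ for all $y\in Y$. $x_I$ denotes the subvector of $x$ with components indexed by $I$. *)

theory Defs
  imports "HOL-Analysis.Analysis"
begin

definition feas_h :: "(real^'n \<Rightarrow> real^'p) \<Rightarrow> (real^'n) set" where
  "feas_h h = {x. \<forall>j. h x $ j \<ge> 0}"

definition setX :: "(real^'n \<Rightarrow> real^'p) \<Rightarrow> 'n set \<Rightarrow> (real^'n) set" where
  "setX h I = {x. (\<forall>j. h x $ j \<ge> 0) \<and> (\<forall>i\<in>I. 0 \<le> x $ i \<and> x $ i \<le> 1)}"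

text \<open>Y := {0,1}^I, represented by vectors in real^'n whose components in I are 0 or 1
  and whose components outside I are 0 (only the I-components matter).\<close>
definition setY :: "'n set \<Rightarrow> (real^'n) set" where
  "setY I = {y. (\<forall>i\<in>I. y $ i = 0 \<or> y $ i = 1) \<and> (\<forall>i. i \<notin> I \<longrightarrow> y $ i = 0)}"

definition distI :: "'n set \<Rightarrow> real^'n \<Rightarrow> real^'n \<Rightarrow> real" where
  "distI I x y = (\<Sum>i\<in>I. \<bar>x $ i - y $ i\<bar>)"

definition partial_min ::
  "(real^'n \<Rightarrow> real^'p) \<Rightarrow> 'n set \<Rightarrow> real^'n \<Rightarrow> real^'n \<Rightarrow> bool" where
  "partial_min h I xs ys \<longleftrightarrow> xs \<in> setX h I \<and> ys \<in> setY I \<and>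
     (\<forall>x\<in>setX h I. distI I xs ys \<le> distI I x ys) \<and>
     (\<forall>y\<in>setY I. distI I xs ys \<le> distI I xs y)"

text \<open>Rounding of x_I with ties (value 1/2) broken lexicographically minimally, i.e. to 0.\<close>
definition rnd :: "'n set \<Rightarrow> real^'n \<Rightarrow> real^'n" where
  "rnd I x = (\<chi> i. if i \<in> I \<and> x $ i > 1/2 then 1 else 0)"

text \<open>A run of the idealized feasibility pump (stopped at the first partial minimum;
  after stopping the sequences are unconstrained).\<close>
definition fp_run ::
  "(real^'n \<Rightarrow> real) \<Rightarrow> (real^'n \<Rightarrow> real^'p) \<Rightarrow> 'n set \<Rightarrow>
   (nat \<Rightarrow> real^'n) \<Rightarrow> (nat \<Rightarrow> real^'n) \<Rightarrow> bool" where
  "fp_run F h I xs ys \<longleftrightarrow>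
     xs 0 \<in> setX h I \<and> (\<forall>x\<in>setX h I. F (xs 0) \<le> F x) \<and>
     ys 0 = rnd I (xs 0) \<and>
     (\<forall>k. (\<forall>k'\<le>k. \<not> partial_min h I (xs k') (ys k')) \<longrightarrow>
          xs (Suc k) \<in> setX h I \<and>
          (\<forall>x\<in>setX h I. distI I (xs (Suc k)) (ys k) \<le> distI I x (ys k)) \<and>
          ys (Suc k) = rnd I (xs (Suc k)))"

end

theory Submission
  imports Defs
begin

lemma finite_setY: "finite (setY (I::'n::finite set))"
proof -
  have fin: "finite {f::'n\<Rightarrow>real. \<forall>x. (x \<in> UNIV \<longrightarrow> f x \<in> {0,1}) \<and> (x \<notin> UNIV \<longrightarrow> f x = 0)}"
    by (rule finite_set_of_finite_funs) auto
  have "setY I \<subseteq> vec_lambda ` {f::'n\<Rightarrow>real. \<forall>x. (x \<in> UNIV \<longrightarrow> f x \<in> {0,1}) \<and> (x \<notin> UNIV \<longrightarrow> f x = 0)}"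
  proof
    fix y assume y: "y \<in> setY I"
    have "y = vec_lambda (vec_nth y)" by simp
    moreover have "\<forall>i. vec_nth y i \<in> {0,1}" using y unfolding setY_def by auto
    ultimately show "y \<in> vec_lambda ` {f::'n\<Rightarrow>real. \<forall>x. (x \<in> UNIV \<longrightarrow> f x \<in> {0,1}) \<and> (x \<notin> UNIV \<longrightarrow> f x = 0)}"
      by blast
  qed
  thus ?thesis using fin finite_subset by blast
qed

lemma rnd_in: "rnd I x \<in> setY I"
  unfolding rnd_def setY_def by auto

lemma rnd_opt: "y \<in> setY I \<Longrightarrow> distI I x (rnd I x) \<le> distI I x y"
  unfolding distI_def
proof (rule sum_mono)
  fix i assume "y \<in> setY I" "i \<in> I"
  then have "y $ i = 0 \<or> y $ i = 1" unfolding setY_def by auto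
  then show "\<bar>x $ i - rnd I x $ i\<bar> \<le> \<bar>x $ i - y $ i\<bar>"
    using \<open>i \<in> I\<close> unfolding rnd_def by auto
qed

theorem mainTheorem3:
  fixes F :: "real^'n \<Rightarrow> real" and h :: "real^'n \<Rightarrow> real^'p" and I :: "'n set"
    and xs ys :: "nat \<Rightarrow> real^'n"
  assumes "convex_on UNIV F" and "continuous_on UNIV F"
    and "\<forall>j. convex_on UNIV (\<lambda>x. - (h x $ j))" and "continuous_on UNIV h"
    and "I \<noteq> {}"
    and "feas_h h \<noteq> {}" and "compact (feas_h h)"
    and "fp_run F h I xs ys"
  shows "(\<forall>x. rnd I x \<in> setY I \<and> (\<forall>y\<in>setY I. distI I x (rnd I x) \<le> distI I x y))
    \<and> (\<exists>K. partial_min h I (xs K) (ys K) \<and> (\<forall>k<K. \<not> partial_min h I (xs k) (ys k))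
          \<and> (distI I (xs K) (ys K) = 0 \<longrightarrow>
               (\<forall>j. h (xs K) $ j \<ge> 0) \<and> (\<forall>i\<in>I. xs K $ i = 0 \<or> xs K $ i = 1)))"
proof -
  have run: "xs 0 \<in> setX h I" "ys 0 = rnd I (xs 0)"
    "\<And>k. (\<forall>k'\<le>k. \<not> partial_min h I (xs k') (ys k')) \<Longrightarrow>
          xs (Suc k) \<in> setX h I \<and>
          (\<forall>x\<in>setX h I. distI I (xs (Suc k)) (ys k) \<le> distI I x (ys k)) \<and>
          ys (Suc k) = rnd I (xs (Suc k))"
    using assms(8) unfolding fp_run_def by auto
  have ex: "\<exists>K. partial_min h I (xs K) (ys K)"
  proof (rule ccontr)
    assume "\<not> ?thesis"
    hence np: "\<And>k. \<not> partial_min h I (xs k) (ys k)" by blast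
    have st: "\<And>k. xs (Suc k) \<in> setX h I \<and>
          (\<forall>x\<in>setX h I. distI I (xs (Suc k)) (ys k) \<le> distI I x (ys k)) \<and>
          ys (Suc k) = rnd I (xs (Suc k))" using run(3) np by blast
    have inX: "\<And>k. xs k \<in> setX h I" by (case_tac k) (use run(1) st in auto)
    have ry: "\<And>k. ys k = rnd I (xs k)" by (case_tac k) (use run(2) st in auto)
    define g where "g k = distI I (xs (Suc k)) (ys k)" for k
    have dec: "g (Suc k) < g k" for k
    proof -
      have yY: "ys (Suc k) \<in> setY I" using ry rnd_in by metis
      have yopt: "\<forall>y\<in>setY I. distI I (xs (Suc k)) (ys (Suc k)) \<le> distI I (xs (Suc k)) y"
        using ry rnd_opt by metis
      from np[of "Suc k"] inX[of "Suc k"] yY yopt obtain x where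
        x: "x \<in> setX h I" "distI I x (ys (Suc k)) < distI I (xs (Suc k)) (ys (Suc k))"
        unfolding partial_min_def by force
      have "g (Suc k) \<le> distI I x (ys (Suc k))" using st[of "Suc k"] x(1) g_def by auto
      also have "\<dots> < distI I (xs (Suc k)) (ys (Suc k))" by (rule x(2))
      also have "\<dots> \<le> distI I (xs (Suc k)) (ys k)"
        using yopt ry rnd_in by metis
      finally show ?thesis unfolding g_def .
    qed
    have sm: "strict_mono (\<lambda>k. - g k)" by (rule strict_monoI_Suc) (use dec in auto)
    have "inj ys"
    proof (rule injI)
      fix i j assume eq: "ys i = ys j"
      have "g i \<le> g j" using st[of i] inX[of "Suc j"] eq g_def by auto
      moreover have "g j \<le> g i" using st[of j] inX[of "Suc i"] eq g_def by auto
      ultimately have "g i = g j" by simp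
      thus "i = j" using strict_mono_eq[OF sm] by simp
    qed
    moreover have "range ys \<subseteq> setY I" using ry rnd_in by auto
    ultimately have "finite (UNIV::nat set)"
      using finite_setY[of I] by (meson finite_imageD finite_subset)
    thus False by simp
  qed
  define K where "K = (LEAST K. partial_min h I (xs K) (ys K))"
  have pK: "partial_min h I (xs K) (ys K)" using ex K_def LeastI_ex by metis
  have bK: "\<forall>k<K. \<not> partial_min h I (xs k) (ys k)" using K_def not_less_Least by blast
  have last: "distI I (xs K) (ys K) = 0 \<longrightarrow>
               (\<forall>j. h (xs K) $ j \<ge> 0) \<and> (\<forall>i\<in>I. xs K $ i = 0 \<or> xs K $ i = 1)"
  proof
    assume d: "distI I (xs K) (ys K) = 0"
    have XK: "xs K \<in> setX h I" and YK: "ys K \<in> setY I" using pK partial_min_def by auto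
    have "\<forall>i\<in>I. \<bar>xs K $ i - ys K $ i\<bar> = 0"
      using d unfolding distI_def by (subst (asm) sum_nonneg_eq_0_iff) auto
    then show "(\<forall>j. h (xs K) $ j \<ge> 0) \<and> (\<forall>i\<in>I. xs K $ i = 0 \<or> xs K $ i = 1)"
      using XK YK unfolding setX_def setY_def by auto
  qed
  show ?thesis using rnd_in rnd_opt pK bK last by blast
qed

end
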